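(* Let $n\in\mathbb N$ and $i,j\in\{1,2\}$. (i) If $n$ is odd and $n\ge 17$, then $r(T_n^i,T_n^j)=2n-7$. (ii) If $n$ is even and $n\ge 12$, then $r(T_n^i,T_n^j)=2n-6$.
   Context: All graphs are finite and simple; a graph "contains" $H$ if it has a subgraph isomorphic to $H$. For graphs $G_1,G_2$, the Ramsey number $r(G_1,G_2)$ is the smallest positive integer $N$ such that for every graph $G$ on $N$ vertices, either $G$ contains a copy of $G_1$ or the complement $\overline G$ contains a copy of $G_2$. For $n\ge 5$, $T_n^1$ is the tree with vertex set $\{v_0,\ldots,v_{n-1}\}$ and edges $v_0v_1,\ldots,v_0v_{n-3},v_{n-4}v_{n-2},v_{n-3}v_{n-1}$, and $T_n^2$ is the tree on the same vertex set with edges $v_0v_1,\ldots,v_0v_{n-3},v_{n-3}v_{n-2},v_{n-3}v_{n-1}$. *)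

theory Defs
  imports Main
begin

type_synonym 'a graph = "'a set \<times> 'a set set"

definition simple_graph :: "'a graph \<Rightarrow> bool" where
  "simple_graph G \<longleftrightarrow> finite (fst G) \<and>
     (\<forall>e \<in> snd G. \<exists>u v. e = {u, v} \<and> u \<noteq> v \<and> u \<in> fst G \<and> v \<in> fst G)"

definition complement :: "'a graph \<Rightarrow> 'a graph" where
  "complement G = (fst G,
     {{u, v} | u v. u \<in> fst G \<and> v \<in> fst G \<and> u \<noteq> v \<and> {u, v} \<notin> snd G})"

definition contains :: "'a graph \<Rightarrow> 'b graph \<Rightarrow> bool" where
  "contains G H \<longleftrightarrow> (\<exists>f. inj_on f (fst H) \<and> f ` fst H \<subseteq> fst G \<and>
     (\<forall>u \<in> fst H. \<forall>v \<in> fst H. {u, v} \<in> snd H \<longrightarrow> {f u, f v} \<in> snd G))"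

text \<open>Ramsey number: least positive N such that every graph on N vertices contains G1
  or its complement contains G2. (Host graphs on nat vertices, which is no loss since
  containment is invariant under relabelling.)\<close>
definition ramsey_prop :: "'a graph \<Rightarrow> 'b graph \<Rightarrow> nat \<Rightarrow> bool" where
  "ramsey_prop G1 G2 N \<longleftrightarrow> (\<forall>G :: nat graph. simple_graph G \<and> card (fst G) = N \<longrightarrow>
      contains G G1 \<or> contains (complement G) G2)"

definition ramsey :: "'a graph \<Rightarrow> 'b graph \<Rightarrow> nat" where
  "ramsey G1 G2 = (LEAST N. N > 0 \<and> ramsey_prop G1 G2 N)"

definition tree1 :: "nat \<Rightarrow> nat graph" where
  "tree1 n = ({0..<n},
     {{0, k} | k. 1 \<le> k \<and> k \<le> n - 3} \<union> {{n - 4, n - 2}, {n - 3, n - 1}})"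

definition tree2 :: "nat \<Rightarrow> nat graph" where
  "tree2 n = ({0..<n},
     {{0, k} | k. 1 \<le> k \<and> k \<le> n - 3} \<union> {{n - 3, n - 2}, {n - 3, n - 1}})"

definition tree :: "nat \<Rightarrow> nat \<Rightarrow> nat graph" where
  "tree n i = (if i = 1 then tree1 n else tree2 n)"

end

theory Submission
  imports Defs
begin

definition nb :: "'a graph \<Rightarrow> 'a \<Rightarrow> 'a set" where
  "nb H c = {x \<in> fst H. {c,x} \<in> snd H}"

lemma simple_edge:
  assumes "simple_graph H" "{x,y} \<in> snd H"
  shows "x \<in> fst H \<and> y \<in> fst H \<and> x \<noteq> y"
proof -
  obtain u v where "{x,y} = {u,v}" "u \<noteq> v" "u \<in> fst H" "v \<in> fst H"
    using assms unfolding simple_graph_def by blast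
  then show ?thesis by (auto simp: doubleton_eq_iff)
qed

lemma nb_sub: "nb H c \<subseteq> fst H" by (auto simp: nb_def)

lemma nb_iff: "simple_graph H \<Longrightarrow> x \<in> nb H c \<longleftrightarrow> {c,x} \<in> snd H"
  unfolding nb_def using simple_edge[of H c x] by blast

lemma nb_notin: "simple_graph H \<Longrightarrow> c \<notin> nb H c"
  unfolding nb_def using simple_edge[of H c c] by blast

lemma compl_edge:
  "{x,y} \<in> snd (complement G) \<longleftrightarrow> x \<in> fst G \<and> y \<in> fst G \<and> x \<noteq> y \<and> {x,y} \<notin> snd G"
proof
  assume "{x,y} \<in> snd (complement G)"
  then obtain u v where "{x,y} = {u,v}" "u \<in> fst G" "v \<in> fst G" "u \<noteq> v" "{u,v} \<notin> snd G"
    unfolding complement_def by auto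
  then show "x \<in> fst G \<and> y \<in> fst G \<and> x \<noteq> y \<and> {x,y} \<notin> snd G"
    by (auto simp: doubleton_eq_iff insert_commute)
qed (auto simp: complement_def)

lemma compl_simple: "simple_graph G \<Longrightarrow> simple_graph (complement G)"
  unfolding simple_graph_def complement_def by auto

lemma compl_fst[simp]: "fst (complement G) = fst G" by (simp add: complement_def)

lemma compl_compl: "simple_graph G \<Longrightarrow> complement (complement G) = G"
proof -
  assume s: "simple_graph G"
  have "snd (complement (complement G)) = snd G"
  proof
    show "snd (complement (complement G)) \<subseteq> snd G"
      unfolding complement_def[of "complement G"] using compl_edge[of _ _ G] by auto
    show "snd G \<subseteq> snd (complement (complement G))"
    proof
      fix e assume "e \<in> snd G"
      then obtain u v where "e = {u,v}" "u \<noteq> v" "u \<in> fst G" "v \<in> fst G"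
        using s unfolding simple_graph_def by blast
      then show "e \<in> snd (complement (complement G))"
        unfolding complement_def[of "complement G"] using compl_edge[of u v G] \<open>e \<in> snd G\<close> by auto
    qed
  qed
  then show ?thesis by (metis compl_fst prod.exhaust_sel)
qed

lemma nb_compl: "simple_graph G \<Longrightarrow> c \<in> fst G \<Longrightarrow> nb (complement G) c = fst G - {c} - nb G c"
  using compl_edge[of c _ G] simple_edge[of G] by (auto simp: nb_def)

lemma card_diff_ge: "finite F \<Longrightarrow> card S - card F \<le> card (S - F)"
  by (simp add: diff_card_le_card_Diff)

lemma pick2: assumes "finite S" "card S \<ge> 2" obtains x y where "x \<in> S" "y \<in> S" "x \<noteq> y"
proof -
  obtain x where x: "x \<in> S" using assms by fastforce
  have "card (S - {x}) \<ge> 1" using assms x by auto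
  then have "S - {x} \<noteq> {}" by (metis card.empty not_one_le_zero)
  then obtain y where "y \<in> S - {x}" by blast
  then show ?thesis using that x by auto
qed

lemma emb1:
  assumes s: "simple_graph H" and n: "n \<ge> 5"
    and e: "{c,a1} \<in> snd H" "{c,a2} \<in> snd H" "{a1,x1} \<in> snd H" "{a2,x2} \<in> snd H"
    and d: "a1 \<noteq> a2" "c \<noteq> x1" "c \<noteq> x2" "a1 \<noteq> x2" "a2 \<noteq> x1" "x1 \<noteq> x2"
    and L: "L \<subseteq> nb H c - {a1,a2,x1,x2}" "card L \<ge> n - 5"
  shows "contains H (tree1 n)"
proof -
  have fin: "finite (fst H)" using s by (simp add: simple_graph_def)
  have finL: "finite L" using L(1) nb_sub fin by (meson Diff_subset finite_subset order_trans)
  obtain g where g: "g ` {1..n-5} \<subseteq> L" "inj_on g {1..n-5}"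
    using card_le_inj[of "{1..n-5}" L] finL L(2) by auto
  have e': "c \<noteq> a1" "c \<noteq> a2" "a1 \<noteq> x1" "a2 \<noteq> x2"
    "c \<in> fst H" "a1 \<in> fst H" "a2 \<in> fst H" "x1 \<in> fst H" "x2 \<in> fst H"
    using simple_edge[OF s e(1)] simple_edge[OF s e(2)] simple_edge[OF s e(3)] simple_edge[OF s e(4)] by auto
  have cL: "c \<notin> L" using nb_notin[OF s] L(1) by auto
  have gL: "\<And>k. k \<in> {1..n-5} \<Longrightarrow> g k \<in> L" using g by auto
  have Lnb: "\<And>y. y \<in> L \<Longrightarrow> {c,y} \<in> snd H \<and> y \<in> fst H \<and> y \<noteq> a1 \<and> y \<noteq> a2 \<and> y \<noteq> x1 \<and> y \<noteq> x2"
  proof -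
    fix y assume y: "y \<in> L"
    then have "y \<in> nb H c" "y \<notin> {a1,a2,x1,x2}" using L(1) by auto
    then show "?thesis y" using nb_iff[OF s, of y c] nb_sub[of H c] by auto
  qed
  define f where "f k = (if k = 0 then c else if k = n-4 then a1 else if k = n-3 then a2
      else if k = n-2 then x1 else if k = n-1 then x2 else g k)" for k
  have fl: "\<And>k. k \<in> {1..n-5} \<Longrightarrow> f k = g k" using n by (auto simp: f_def)
  have inj: "inj_on f {0..<n}"
  proof (rule inj_onI)
    fix u w assume u: "u \<in> {0..<n}" and w: "w \<in> {0..<n}" and eq: "f u = f w"
    have cu: "u = 0 \<or> u = n-4 \<or> u = n-3 \<or> u = n-2 \<or> u = n-1 \<or> u \<in> {1..n-5}" using u n by auto
    have cw: "w = 0 \<or> w = n-4 \<or> w = n-3 \<or> w = n-2 \<or> w = n-1 \<or> w \<in> {1..n-5}" using w n by auto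
    have v: "f 0 = c" "f (n-4) = a1" "f (n-3) = a2" "f (n-2) = x1" "f (n-1) = x2"
      using n by (auto simp: f_def)
    have gi: "\<And>k k'. k \<in> {1..n-5} \<Longrightarrow> k' \<in> {1..n-5} \<Longrightarrow> g k = g k' \<Longrightarrow> k = k'"
      using g(2) by (auto simp: inj_on_def)
    have fL: "\<And>k. k \<in> {1..n-5} \<Longrightarrow> f k \<in> L" using fl gL by auto
    have ne: "\<And>y. y \<in> L \<Longrightarrow> y \<noteq> c \<and> y \<noteq> a1 \<and> y \<noteq> a2 \<and> y \<noteq> x1 \<and> y \<noteq> x2"
      using Lnb cL by blast
    have ch: "\<And>k. k < n \<Longrightarrow> (f k = c \<longleftrightarrow> k = 0) \<and> (f k = a1 \<longleftrightarrow> k = n-4) \<and> (f k = a2 \<longleftrightarrow> k = n-3)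
        \<and> (f k = x1 \<longleftrightarrow> k = n-2) \<and> (f k = x2 \<longleftrightarrow> k = n-1) \<and> (f k \<in> L \<longleftrightarrow> k \<in> {1..n-5})"
    proof -
      fix k assume k: "k < n"
      then have "k = 0 \<or> k = n-4 \<or> k = n-3 \<or> k = n-2 \<or> k = n-1 \<or> k \<in> {1..n-5}" using n by auto
      then show "?thesis k"
      proof (elim disjE)
        assume "k \<in> {1..n-5}"
        then show ?thesis using fL[of k] ne[of "f k"] n by auto
      qed (use v e' d ne cL n in auto)
    qed
    show "u = w"
    proof (cases "u \<in> {1..n-5}")
      case True
      then have "w \<in> {1..n-5}" using ch[of u] ch[of w] u w eq by auto
      then show ?thesis using True gi fl eq by metis
    next
      case False
      then have "u = 0 \<or> u = n-4 \<or> u = n-3 \<or> u = n-2 \<or> u = n-1" using cu by blast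
      then show ?thesis using ch[of u] ch[of w] u w eq by auto
    qed
  qed
  have img: "f ` {0..<n} \<subseteq> fst H"
  proof
    fix y assume "y \<in> f ` {0..<n}"
    then obtain k where k: "k < n" "y = f k" by auto
    then have "k = 0 \<or> k = n-4 \<or> k = n-3 \<or> k = n-2 \<or> k = n-1 \<or> k \<in> {1..n-5}" using n by auto
    then show "y \<in> fst H" using k fl gL Lnb e' by (auto simp: f_def)
  qed
  have star: "\<And>k. 1 \<le> k \<Longrightarrow> k \<le> n - 3 \<Longrightarrow> {f 0, f k} \<in> snd H"
  proof -
    fix k assume k: "1 \<le> k" "k \<le> n - 3"
    then have "k = n-4 \<or> k = n-3 \<or> k \<in> {1..n-5}" using n by auto
    then show "{f 0, f k} \<in> snd H" using fl gL Lnb e n by (auto simp: f_def)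
  qed
  have p1: "{f (n-4), f (n-2)} \<in> snd H" using e n by (auto simp: f_def)
  have p2: "{f (n-3), f (n-1)} \<in> snd H" using e n by (auto simp: f_def)
  show ?thesis
    unfolding contains_def tree1_def
  proof (intro exI[of _ f] conjI ballI impI)
    show "inj_on f (fst ({0..<n}, {{0, k} |k. 1 \<le> k \<and> k \<le> n - 3} \<union> {{n - 4, n - 2}, {n - 3, n - 1}}))"
      using inj by simp
    show "f ` fst ({0..<n}, {{0, k} |k. 1 \<le> k \<and> k \<le> n - 3} \<union> {{n - 4, n - 2}, {n - 3, n - 1}}) \<subseteq> fst H"
      using img by simp
  next
    fix u w assume "{u, w} \<in> snd ({0..<n}, {{0, k} |k. 1 \<le> k \<and> k \<le> n - 3} \<union> {{n - 4, n - 2}, {n - 3, n - 1}})"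
    then have "(\<exists>k. 1 \<le> k \<and> k \<le> n - 3 \<and> {u,w} = {0,k}) \<or> {u,w} = {n-4,n-2} \<or> {u,w} = {n-3,n-1}"
      by (simp only: snd_conv Un_iff insert_iff empty_iff mem_Collect_eq) blast
    then show "{f u, f w} \<in> snd H"
    proof (elim disjE exE conjE)
      fix k assume "1 \<le> k" "k \<le> n-3" "{u,w} = {0,k}"
      then have "{f u, f w} = {f 0, f k}" by (auto simp: doubleton_eq_iff)
      then show ?thesis using star \<open>1 \<le> k\<close> \<open>k \<le> n-3\<close> by simp
    next
      assume "{u,w} = {n-4,n-2}"
      then have "{f u, f w} = {f (n-4), f (n-2)}" by (auto simp: doubleton_eq_iff)
      then show ?thesis using p1 by simp
    next
      assume "{u,w} = {n-3,n-1}"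
      then have "{f u, f w} = {f (n-3), f (n-1)}" by (auto simp: doubleton_eq_iff)
      then show ?thesis using p2 by simp
    qed
  qed
qed

lemma emb2:
  assumes s: "simple_graph H" and n: "n \<ge> 5"
    and e: "{c,a} \<in> snd H" "{a,x1} \<in> snd H" "{a,x2} \<in> snd H"
    and d: "c \<noteq> x1" "c \<noteq> x2" "x1 \<noteq> x2"
    and L: "L \<subseteq> nb H c - {a,x1,x2}" "card L \<ge> n - 4"
  shows "contains H (tree2 n)"
proof -
  have fin: "finite (fst H)" using s by (simp add: simple_graph_def)
  have finL: "finite L" using L(1) nb_sub fin by (meson Diff_subset finite_subset order_trans)
  obtain g where g: "g ` {1..n-4} \<subseteq> L" "inj_on g {1..n-4}"
    using card_le_inj[of "{1..n-4}" L] finL L(2) by auto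
  have e': "c \<noteq> a" "a \<noteq> x1" "a \<noteq> x2"
    "c \<in> fst H" "a \<in> fst H" "x1 \<in> fst H" "x2 \<in> fst H"
    using simple_edge[OF s e(1)] simple_edge[OF s e(2)] simple_edge[OF s e(3)] by auto
  have cL: "c \<notin> L" using nb_notin[OF s] L(1) by auto
  have gL: "\<And>k. k \<in> {1..n-4} \<Longrightarrow> g k \<in> L" using g by auto
  have Lnb: "\<And>y. y \<in> L \<Longrightarrow> {c,y} \<in> snd H \<and> y \<in> fst H \<and> y \<noteq> a \<and> y \<noteq> x1 \<and> y \<noteq> x2"
  proof -
    fix y assume y: "y \<in> L"
    then have "y \<in> nb H c" "y \<notin> {a,x1,x2}" using L(1) by auto
    then show "?thesis y" using nb_iff[OF s, of y c] nb_sub[of H c] by auto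
  qed
  define f where "f k = (if k = 0 then c else if k = n-3 then a
      else if k = n-2 then x1 else if k = n-1 then x2 else g k)" for k
  have fl: "\<And>k. k \<in> {1..n-4} \<Longrightarrow> f k = g k" using n by (auto simp: f_def)
  have inj: "inj_on f {0..<n}"
  proof (rule inj_onI)
    fix u w assume u: "u \<in> {0..<n}" and w: "w \<in> {0..<n}" and eq: "f u = f w"
    have cu: "u = 0 \<or> u = n-3 \<or> u = n-2 \<or> u = n-1 \<or> u \<in> {1..n-4}" using u n by auto
    have cw: "w = 0 \<or> w = n-3 \<or> w = n-2 \<or> w = n-1 \<or> w \<in> {1..n-4}" using w n by auto
    have v: "f 0 = c" "f (n-3) = a" "f (n-2) = x1" "f (n-1) = x2"
      using n by (auto simp: f_def)
    have gi: "\<And>k k'. k \<in> {1..n-4} \<Longrightarrow> k' \<in> {1..n-4} \<Longrightarrow> g k = g k' \<Longrightarrow> k = k'"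
      using g(2) by (auto simp: inj_on_def)
    have fL: "\<And>k. k \<in> {1..n-4} \<Longrightarrow> f k \<in> L" using fl gL by auto
    have ne: "\<And>y. y \<in> L \<Longrightarrow> y \<noteq> c \<and> y \<noteq> a \<and> y \<noteq> x1 \<and> y \<noteq> x2"
      using Lnb cL by blast
    have ch: "\<And>k. k < n \<Longrightarrow> (f k = c \<longleftrightarrow> k = 0) \<and> (f k = a \<longleftrightarrow> k = n-3)
        \<and> (f k = x1 \<longleftrightarrow> k = n-2) \<and> (f k = x2 \<longleftrightarrow> k = n-1) \<and> (f k \<in> L \<longleftrightarrow> k \<in> {1..n-4})"
    proof -
      fix k assume k: "k < n"
      then have "k = 0 \<or> k = n-3 \<or> k = n-2 \<or> k = n-1 \<or> k \<in> {1..n-4}" using n by auto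
      then show "?thesis k"
      proof (elim disjE)
        assume "k \<in> {1..n-4}"
        then show ?thesis using fL[of k] ne[of "f k"] n by auto
      qed (use v e' d ne cL n in auto)
    qed
    show "u = w"
    proof (cases "u \<in> {1..n-4}")
      case True
      then have "w \<in> {1..n-4}" using ch[of u] ch[of w] u w eq by auto
      then show ?thesis using True gi fl eq by metis
    next
      case False
      then have "u = 0 \<or> u = n-3 \<or> u = n-2 \<or> u = n-1" using cu by blast
      then show ?thesis using ch[of u] ch[of w] u w eq by auto
    qed
  qed
  have img: "f ` {0..<n} \<subseteq> fst H"
  proof
    fix y assume "y \<in> f ` {0..<n}"
    then obtain k where k: "k < n" "y = f k" by auto
    then have "k = 0 \<or> k = n-3 \<or> k = n-2 \<or> k = n-1 \<or> k \<in> {1..n-4}" using n by auto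
    then show "y \<in> fst H" using k fl gL Lnb e' by (auto simp: f_def)
  qed
  have star: "\<And>k. 1 \<le> k \<Longrightarrow> k \<le> n - 3 \<Longrightarrow> {f 0, f k} \<in> snd H"
  proof -
    fix k assume k: "1 \<le> k" "k \<le> n - 3"
    then have "k = n-3 \<or> k \<in> {1..n-4}" using n by auto
    then show "{f 0, f k} \<in> snd H" using fl gL Lnb e n by (auto simp: f_def)
  qed
  have p1: "{f (n-3), f (n-2)} \<in> snd H" using e n by (auto simp: f_def)
  have p2: "{f (n-3), f (n-1)} \<in> snd H" using e n by (auto simp: f_def)
  show ?thesis
    unfolding contains_def tree2_def
  proof (intro exI[of _ f] conjI ballI impI)
    show "inj_on f (fst ({0..<n}, {{0, k} |k. 1 \<le> k \<and> k \<le> n - 3} \<union> {{n - 3, n - 2}, {n - 3, n - 1}}))"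
      using inj by simp
    show "f ` fst ({0..<n}, {{0, k} |k. 1 \<le> k \<and> k \<le> n - 3} \<union> {{n - 3, n - 2}, {n - 3, n - 1}}) \<subseteq> fst H"
      using img by simp
  next
    fix u w assume "{u, w} \<in> snd ({0..<n}, {{0, k} |k. 1 \<le> k \<and> k \<le> n - 3} \<union> {{n - 3, n - 2}, {n - 3, n - 1}})"
    then have "(\<exists>k. 1 \<le> k \<and> k \<le> n - 3 \<and> {u,w} = {0,k}) \<or> {u,w} = {n-3,n-2} \<or> {u,w} = {n-3,n-1}"
      by (simp only: snd_conv Un_iff insert_iff empty_iff mem_Collect_eq) blast
    then show "{f u, f w} \<in> snd H"
    proof (elim disjE exE conjE)
      fix k assume "1 \<le> k" "k \<le> n-3" "{u,w} = {0,k}"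
      then have "{f u, f w} = {f 0, f k}" by (auto simp: doubleton_eq_iff)
      then show ?thesis using star \<open>1 \<le> k\<close> \<open>k \<le> n-3\<close> by simp
    next
      assume "{u,w} = {n-3,n-2}"
      then have "{f u, f w} = {f (n-3), f (n-2)}" by (auto simp: doubleton_eq_iff)
      then show ?thesis using p1 by simp
    next
      assume "{u,w} = {n-3,n-1}"
      then have "{f u, f w} = {f (n-3), f (n-1)}" by (auto simp: doubleton_eq_iff)
      then show ?thesis using p2 by simp
    qed
  qed
qed

lemma card_diff2: "finite S \<Longrightarrow> card S - 2 \<le> card (S - {a,b})"
proof -
  assume "finite S"
  have "card {a,b} \<le> 2" by (simp add: card_insert_le_m1)
  then show ?thesis using diff_card_le_card_Diff[of "{a,b}" S] by simp
qed

lemma card_diff1: "finite S \<Longrightarrow> card S - 1 \<le> card (S - {a})"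
  by (simp add: diff_card_le_card_Diff[of "{a}" S, simplified])

lemma gen:
  assumes s: "simple_graph H" and n: "n \<ge> 5"
    and X: "X \<subseteq> nb H c" "X \<inter> Y = {}" "c \<notin> Y" "card X \<ge> n - 3"
    and pq: "p \<in> X" "q \<in> X" "p \<noteq> q"
    and cp: "card (nb H p \<inter> Y) \<ge> 2" and cq: "card (nb H q \<inter> Y) \<ge> 2"
  shows "contains H (tree1 n) \<and> contains H (tree2 n)"
proof -
  have fin: "finite (fst H)" using s by (simp add: simple_graph_def)
  have finnb: "\<And>z. finite (nb H z)" using fin nb_sub finite_subset by metis
  have finX: "finite X" using X(1) finnb finite_subset by metis
  have ecp: "{c,p} \<in> snd H" "{c,q} \<in> snd H" using X(1) pq nb_iff[OF s] by auto
  obtain x1 x2 where x: "x1 \<in> nb H p \<inter> Y" "x2 \<in> nb H p \<inter> Y" "x1 \<noteq> x2"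
    using pick2[of "nb H p \<inter> Y"] cp finnb by blast
  have "card (nb H q \<inter> Y - {x1}) \<ge> 1"
    using card_diff1[of "nb H q \<inter> Y" x1] cq finnb by force
  then have "nb H q \<inter> Y - {x1} \<noteq> {}" by (metis card.empty not_one_le_zero)
  then obtain y2 where y2: "y2 \<in> nb H q \<inter> Y" "y2 \<noteq> x1" by blast
  have t1: "contains H (tree1 n)"
  proof (rule emb1[OF s n, of c p q x1 y2 "X - {p,q}"])
    show "{c,p} \<in> snd H" "{c,q} \<in> snd H" by (fact ecp)+
    show "{p,x1} \<in> snd H" "{q,y2} \<in> snd H" using x y2 nb_iff[OF s] by auto
    show "p \<noteq> q" by (fact pq)
    show "c \<noteq> x1" "c \<noteq> y2" using x y2 X(3) by auto
    show "p \<noteq> y2" "q \<noteq> x1" using x y2 X(2) pq by auto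
    show "x1 \<noteq> y2" using y2 by simp
    show "X - {p,q} \<subseteq> nb H c - {p,q,x1,y2}" using X x y2 by auto
    show "n - 5 \<le> card (X - {p,q})" using card_diff2[OF finX, of p q] X(4) by simp
  qed
  have t2: "contains H (tree2 n)"
  proof (rule emb2[OF s n, of c p x1 x2 "X - {p}"])
    show "{c,p} \<in> snd H" by (fact ecp)
    show "{p,x1} \<in> snd H" "{p,x2} \<in> snd H" using x nb_iff[OF s] by auto
    show "c \<noteq> x1" "c \<noteq> x2" using x X(3) by auto
    show "x1 \<noteq> x2" by (fact x(3))
    show "X - {p} \<subseteq> nb H c - {p,x1,x2}" using X x by auto
    show "n - 4 \<le> card (X - {p})" using card_diff1[OF finX, of p] X(4) by simp
  qed
  show ?thesis using t1 t2 by simp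
qed

lemma avg:
  fixes R :: "'a \<Rightarrow> 'a \<Rightarrow> bool"
  assumes fin: "finite A" "finite B" and one: "\<forall>a\<in>A. card {b\<in>B. R a b} \<le> 1"
    and lt: "card A < 2 * card B"
  shows "\<exists>b\<in>B. card {a\<in>A. R a b} \<le> 1"
proof (rule ccontr)
  assume "\<not> ?thesis"
  then have ge: "\<forall>b\<in>B. 2 \<le> card {a\<in>A. R a b}" by auto
  have "2 * card B = (\<Sum>b\<in>B. 2)" by simp
  also have "\<dots> \<le> (\<Sum>b\<in>B. card {a\<in>A. R a b})" using ge by (intro sum_mono) auto
  also have "\<dots> = (\<Sum>b\<in>B. \<Sum>a\<in>A. if R a b then 1 else 0)"
    using fin by (simp add: sum.If_cases Int_def conj_commute)
  also have "\<dots> = (\<Sum>a\<in>A. \<Sum>b\<in>B. if R a b then 1 else 0)" by (rule sum.swap)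
  also have "\<dots> = (\<Sum>a\<in>A. card {b\<in>B. R a b})"
    using fin by (simp add: sum.If_cases Int_def conj_commute)
  also have "\<dots> \<le> (\<Sum>a\<in>A. 1)" using one by (intro sum_mono) auto
  also have "\<dots> = card A" by simp
  finally show False using lt by simp
qed

lemma core:
  assumes s: "simple_graph G" and n: "n \<ge> 12"
    and cV: "card (fst G) \<ge> 2*n - 7" and v: "v \<in> fst G"
    and A: "A \<subseteq> nb G v" "n - 3 \<le> card A" "card A \<le> n - 2"
    and X0: "X0 \<subseteq> {v}" "\<forall>b\<in>fst G - {v} - A. \<forall>w\<in>X0. {b,w} \<in> snd (complement G)"
      "card A + card X0 \<ge> n - 2"
  shows "(contains G (tree1 n) \<or> (contains (complement G) (tree1 n) \<and> contains (complement G) (tree2 n)))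
       \<and> (contains G (tree2 n) \<or> (contains (complement G) (tree1 n) \<and> contains (complement G) (tree2 n)))"
proof -
  define V where "V = fst G"
  define E where "E = snd G"
  define Bs where "Bs = V - {v} - A"
  have fin: "finite V" using s by (simp add: simple_graph_def V_def)
  have sc: "simple_graph (complement G)" using s by (rule compl_simple)
  have n5: "n \<ge> 5" using n by simp
  have vA: "v \<notin> A" using A(1) nb_notin[OF s] by auto
  have AV: "A \<subseteq> V" using A(1) nb_sub[of G v] unfolding V_def by blast
  have finA: "finite A" using AV fin finite_subset by metis
  have finB: "finite Bs" using fin by (simp add: Bs_def)
  have BsV: "Bs \<subseteq> V" by (auto simp: Bs_def)
  have AB: "A \<inter> Bs = {}" "v \<notin> Bs" by (auto simp: Bs_def)
  have cB: "card Bs = card V - 1 - card A"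
  proof -
    have "card (V - {v}) = card V - 1" using v by (simp add: V_def)
    moreover have "A \<subseteq> V - {v}" using AV vA by auto
    ultimately show ?thesis unfolding Bs_def using card_Diff_subset[of A "V - {v}"] finA
      by (simp add: Diff_insert2[symmetric])
  qed
  have cB': "card Bs \<ge> n - 6" using cB cV A(3) unfolding V_def by linarith
  have X0A: "X0 \<inter> A = {}" "X0 \<inter> Bs = {}" using X0(1) vA AB by auto
  have finX0: "finite X0" using finite_subset[OF X0(1)] by simp
  have redE: "\<And>x y. {x,y} \<in> E \<Longrightarrow> x \<in> V \<and> y \<in> V \<and> x \<noteq> y"
    unfolding V_def E_def by (rule simple_edge[OF s])
  have blue: "\<And>x y. {x,y} \<in> snd (complement G) \<longleftrightarrow> x \<in> V \<and> y \<in> V \<and> x \<noteq> y \<and> {x,y} \<notin> E"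
    unfolding V_def E_def by (rule compl_edge)
  have nbc: "\<And>x y. y \<in> nb (complement G) x \<longleftrightarrow> x \<in> V \<and> y \<in> V \<and> x \<noteq> y \<and> {x,y} \<notin> E"
    unfolding blue[symmetric] by (rule nb_iff[OF sc])
  have nbr: "\<And>x y. y \<in> nb G x \<longleftrightarrow> {x,y} \<in> E"
    unfolding E_def by (rule nb_iff[OF s])
  have vAe: "\<And>a. a \<in> A \<Longrightarrow> {v,a} \<in> E" using A(1) nbr by auto
  have R1: "contains G (tree1 n) \<or> (contains (complement G) (tree1 n) \<and> contains (complement G) (tree2 n))"
  proof (cases "\<exists>a1 a2 b1 b2. a1 \<in> A \<and> a2 \<in> A \<and> a1 \<noteq> a2 \<and> b1 \<in> Bs \<and> b2 \<in> Bs \<and> b1 \<noteq> b2 \<and> {a1,b1} \<in> E \<and> {a2,b2} \<in> E")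
    case True
    then obtain a1 a2 b1 b2 where m: "a1 \<in> A" "a2 \<in> A" "a1 \<noteq> a2" "b1 \<in> Bs" "b2 \<in> Bs" "b1 \<noteq> b2"
      "{a1,b1} \<in> E" "{a2,b2} \<in> E" by blast
    have "contains G (tree1 n)"
    proof (rule emb1[OF s n5, of v a1 a2 b1 b2 "A - {a1,a2}"])
      show "{v,a1} \<in> snd G" "{v,a2} \<in> snd G" "{a1,b1} \<in> snd G" "{a2,b2} \<in> snd G"
        using m vAe unfolding E_def by auto
      show "a1 \<noteq> a2" "v \<noteq> b1" "v \<noteq> b2" "a1 \<noteq> b2" "a2 \<noteq> b1" "b1 \<noteq> b2"
        using m AB by auto
      show "A - {a1,a2} \<subseteq> nb G v - {a1,a2,b1,b2}" using A(1) m AB by auto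
      show "n - 5 \<le> card (A - {a1,a2})" using card_diff2[OF finA, of a1 a2] A(2) by simp
    qed
    then show ?thesis by simp
  next
    case False
    have "\<exists>a0 b0. \<forall>a\<in>A. \<forall>b\<in>Bs. {a,b} \<in> E \<longrightarrow> a = a0 \<or> b = b0"
    proof (cases "\<exists>a\<in>A. \<exists>b\<in>Bs. {a,b} \<in> E")
      case True
      then obtain a1 b1 where ab: "a1 \<in> A" "b1 \<in> Bs" "{a1,b1} \<in> E" by blast
      show ?thesis
      proof (cases "\<exists>b'\<in>Bs. b' \<noteq> b1 \<and> {a1,b'} \<in> E")
        case True
        then obtain b' where b': "b' \<in> Bs" "b' \<noteq> b1" "{a1,b'} \<in> E" by blast
        have "\<forall>a\<in>A. \<forall>b\<in>Bs. {a,b} \<in> E \<longrightarrow> a = a1"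
        proof (intro ballI impI)
          fix a b assume "a \<in> A" "b \<in> Bs" "{a,b} \<in> E"
          then show "a = a1" using False ab b' by (cases "b = b1") blast+
        qed
        then show ?thesis by blast
      next
        case False2: False
        have "\<forall>a\<in>A. \<forall>b\<in>Bs. {a,b} \<in> E \<longrightarrow> b = b1"
        proof (intro ballI impI)
          fix a b assume "a \<in> A" "b \<in> Bs" "{a,b} \<in> E"
          then show "b = b1" using False False2 ab by (cases "a = a1") blast+
        qed
        then show ?thesis by blast
      qed
    qed blast
    then obtain a0 b0 where ab0: "\<forall>a\<in>A. \<forall>b\<in>Bs. {a,b} \<in> E \<longrightarrow> a = a0 \<or> b = b0" by blast
    have "card (Bs - {b0}) \<ge> 1" using card_diff1[OF finB, of b0] cB' n by linarith
    then have "Bs - {b0} \<noteq> {}" by (metis card.empty not_one_le_zero)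
    then obtain b where b: "b \<in> Bs" "b \<noteq> b0" by blast
    have "card (A - {a0}) \<ge> 2" using card_diff1[OF finA, of a0] A(2) n by linarith
    then obtain p q where pq: "p \<in> A - {a0}" "q \<in> A - {a0}" "p \<noteq> q"
      using pick2[of "A - {a0}"] finA by blast
    define Y where "Y = Bs - {b,b0}"
    have cY: "card Y \<ge> 2" using card_diff2[OF finB, of b b0] cB' n unfolding Y_def by linarith
    have pY: "\<And>x. x \<in> A - {a0} \<Longrightarrow> nb (complement G) x \<inter> Y = Y"
    proof -
      fix x assume x: "x \<in> A - {a0}"
      show "nb (complement G) x \<inter> Y = Y"
      proof (rule Int_absorb1, rule subsetI)
        fix y assume y: "y \<in> Y"
        then have "{x,y} \<notin> E" using ab0 x unfolding Y_def by blast
        then show "y \<in> nb (complement G) x" using nbc x y AV BsV AB unfolding Y_def by auto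
      qed
    qed
    have "contains (complement G) (tree1 n) \<and> contains (complement G) (tree2 n)"
    proof (rule gen[OF sc n5, of "(A - {a0}) \<union> X0" b Y p q])
      show "A - {a0} \<union> X0 \<subseteq> nb (complement G) b"
      proof
        fix x assume "x \<in> A - {a0} \<union> X0"
        then show "x \<in> nb (complement G) b"
        proof
          assume x: "x \<in> A - {a0}"
          then have "{x,b} \<notin> E" using ab0 b by blast
          then show ?thesis using nbc x b AV BsV AB by (auto simp: insert_commute)
        next
          assume "x \<in> X0"
          then show ?thesis using X0(2) b nb_iff[OF sc] unfolding Bs_def V_def by blast
        qed
      qed
      show "(A - {a0} \<union> X0) \<inter> Y = {}" using AB X0A unfolding Y_def by auto
      show "b \<notin> Y" unfolding Y_def by simp
      have "card (A - {a0} \<union> X0) = card (A - {a0}) + card X0"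
        using X0A finA finX0 by (intro card_Un_disjoint) auto
      then show "n - 3 \<le> card (A - {a0} \<union> X0)"
        using card_diff1[OF finA, of a0] X0(3) A(2) n by linarith
      show "p \<in> A - {a0} \<union> X0" "q \<in> A - {a0} \<union> X0" "p \<noteq> q" using pq by auto
      show "2 \<le> card (nb (complement G) p \<inter> Y)" "2 \<le> card (nb (complement G) q \<inter> Y)"
        using pY pq cY by auto
    qed
    then show ?thesis by simp
  qed
  have R2: "contains G (tree2 n) \<or> (contains (complement G) (tree1 n) \<and> contains (complement G) (tree2 n))"
  proof (cases "\<exists>a x1 x2. a \<in> A \<and> x1 \<in> Bs \<and> x2 \<in> Bs \<and> x1 \<noteq> x2 \<and> {a,x1} \<in> E \<and> {a,x2} \<in> E")
    case True
    then obtain a x1 x2 where m: "a \<in> A" "x1 \<in> Bs" "x2 \<in> Bs" "x1 \<noteq> x2" "{a,x1} \<in> E" "{a,x2} \<in> E"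
      by blast
    have "contains G (tree2 n)"
    proof (rule emb2[OF s n5, of v a x1 x2 "A - {a}"])
      show "{v,a} \<in> snd G" "{a,x1} \<in> snd G" "{a,x2} \<in> snd G"
        using m vAe unfolding E_def by auto
      show "v \<noteq> x1" "v \<noteq> x2" "x1 \<noteq> x2" using m AB by auto
      show "A - {a} \<subseteq> nb G v - {a,x1,x2}" using A(1) m AB by auto
      show "n - 4 \<le> card (A - {a})" using card_diff1[OF finA, of a] A(2) by simp
    qed
    then show ?thesis by simp
  next
    case False
    have one: "\<forall>a\<in>A. card {b\<in>Bs. {a,b} \<in> E} \<le> 1"
    proof
      fix a assume a: "a \<in> A"
      show "card {b\<in>Bs. {a,b} \<in> E} \<le> 1"
      proof (rule ccontr)
        assume "\<not> ?thesis"
        then have "card {b\<in>Bs. {a,b} \<in> E} \<ge> 2" by simp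
        then obtain x1 x2 where "x1 \<in> {b\<in>Bs. {a,b} \<in> E}" "x2 \<in> {b\<in>Bs. {a,b} \<in> E}" "x1 \<noteq> x2"
          using pick2[of "{b\<in>Bs. {a,b} \<in> E}"] finB by auto
        then show False using False a by blast
      qed
    qed
    have "card A < 2 * card Bs" using A(3) cB' n by linarith
    then obtain b where b: "b \<in> Bs" "card {a\<in>A. {a,b} \<in> E} \<le> 1"
      using avg[OF finA finB one] by blast
    have eqb: "nb G b \<inter> A = {a\<in>A. {a,b} \<in> E}" using nbr by (auto simp: insert_commute)
    define Y where "Y = Bs - {b}"
    have finY: "finite Y" using finB by (simp add: Y_def)
    have cY: "card Y \<ge> n - 7" using card_diff1[OF finB, of b] cB' unfolding Y_def by linarith
    have cAb: "card (A - nb G b) \<ge> n - 4"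
    proof -
      have "A - nb G b = A - (nb G b \<inter> A)" by auto
      moreover have "card (A - (nb G b \<inter> A)) = card A - card (nb G b \<inter> A)"
        using finA by (intro card_Diff_subset) auto
      ultimately show ?thesis using eqb b(2) A(2) by simp
    qed
    then have "card (A - nb G b) \<ge> 2" using n by linarith
    then obtain p q where pq: "p \<in> A - nb G b" "q \<in> A - nb G b" "p \<noteq> q"
      using pick2[of "A - nb G b"] finite_Diff[OF finA] by blast
    have pY: "\<And>x. x \<in> A \<Longrightarrow> card (nb (complement G) x \<inter> Y) \<ge> 2"
    proof -
      fix x assume x: "x \<in> A"
      have sub: "Y - {y\<in>Bs. {x,y} \<in> E} \<subseteq> nb (complement G) x \<inter> Y"
        using nbc x AV BsV AB unfolding Y_def by auto
      have "card Y - card {y\<in>Bs. {x,y} \<in> E} \<le> card (Y - {y\<in>Bs. {x,y} \<in> E})"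
        by (rule card_diff_ge) (use finB in auto)
      moreover have "card (Y - {y\<in>Bs. {x,y} \<in> E}) \<le> card (nb (complement G) x \<inter> Y)"
        using sub finY by (intro card_mono) auto
      ultimately show "card (nb (complement G) x \<inter> Y) \<ge> 2"
        using one x cY n by fastforce
    qed
    have "contains (complement G) (tree1 n) \<and> contains (complement G) (tree2 n)"
    proof (rule gen[OF sc n5, of "(A - nb G b) \<union> X0" b Y p q])
      show "A - nb G b \<union> X0 \<subseteq> nb (complement G) b"
      proof
        fix x assume "x \<in> A - nb G b \<union> X0"
        then show "x \<in> nb (complement G) b"
        proof
          assume x: "x \<in> A - nb G b"
          then have "{b,x} \<notin> E" using nbr by blast
          then show ?thesis using nbc x b AV BsV AB by auto
        next
          assume "x \<in> X0"
          then show ?thesis using X0(2) b nb_iff[OF sc] unfolding Bs_def V_def by blast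
        qed
      qed
      show "(A - nb G b \<union> X0) \<inter> Y = {}" using AB X0A unfolding Y_def by auto
      show "b \<notin> Y" unfolding Y_def by simp
      have "card (A - nb G b \<union> X0) = card (A - nb G b) + card X0"
        using X0A finA finX0 by (intro card_Un_disjoint) auto
      then show "n - 3 \<le> card (A - nb G b \<union> X0)"
      proof -
        have "card (A - nb G b) \<ge> card A - 1"
        proof -
          have "A - nb G b = A - (nb G b \<inter> A)" by auto
          moreover have "card (A - (nb G b \<inter> A)) = card A - card (nb G b \<inter> A)"
            using finA by (intro card_Diff_subset) auto
          ultimately show ?thesis using eqb b(2) by simp
        qed
        then show ?thesis using \<open>card (A - nb G b \<union> X0) = _\<close> X0(3) A(2) n by linarith
      qed
      show "p \<in> A - nb G b \<union> X0" "q \<in> A - nb G b \<union> X0" "p \<noteq> q" using pq by auto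
      show "2 \<le> card (nb (complement G) p \<inter> Y)" "2 \<le> card (nb (complement G) q \<inter> Y)"
        using pY pq by auto
    qed
    then show ?thesis by simp
  qed
  show ?thesis using R1 R2 by simp
qed

lemma tree_cases: "i \<in> {1,2} \<Longrightarrow> tree n i = tree1 n \<or> tree n i = tree2 n"
  by (auto simp: tree_def)

lemma tree_1: "tree n 1 = tree1 n" and tree_2: "tree n 2 = tree2 n"
  by (auto simp: tree_def)

lemma ub:
  assumes s: "simple_graph G" and n: "n \<ge> 12"
    and cV: "card (fst G) \<ge> 2*n - 7" and v: "v \<in> fst G" and dv: "card (nb G v) \<ge> n - 3"
    and ij: "i \<in> {1,2}" "j \<in> {1,2}"
  shows "contains G (tree n i) \<or> contains (complement G) (tree n j)"
proof -
  have fin: "finite (fst G)" using s by (simp add: simple_graph_def)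
  have finnb: "finite (nb G v)" using fin nb_sub finite_subset by metis
  have K: "(contains G (tree1 n) \<or> (contains (complement G) (tree1 n) \<and> contains (complement G) (tree2 n)))
       \<and> (contains G (tree2 n) \<or> (contains (complement G) (tree1 n) \<and> contains (complement G) (tree2 n)))"
  proof (cases "card (nb G v) = n - 3")
    case True
    show ?thesis
    proof (rule core[OF s n cV v, of "nb G v" "{v}"])
      show "nb G v \<subseteq> nb G v" by simp
      show "n - 3 \<le> card (nb G v)" "card (nb G v) \<le> n - 2" using True by auto
      show "{v} \<subseteq> {v}" by simp
      show "n - 2 \<le> card (nb G v) + card {v}" using True n by simp
      show "\<forall>b\<in>fst G - {v} - nb G v. \<forall>w\<in>{v}. {b, w} \<in> snd (complement G)"
      proof (intro ballI)
        fix b w assume b: "b \<in> fst G - {v} - nb G v" and w: "w \<in> {v}"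
        have "{v,b} \<notin> snd G" using b nb_iff[OF s, of b v] by blast
        then have "{b,v} \<notin> snd G" by (simp add: insert_commute)
        then show "{b, w} \<in> snd (complement G)" using w b v compl_edge[of b v G] by auto
      qed
    qed
  next
    case False
    then have "card (nb G v) \<ge> n - 2" using dv by linarith
    then obtain A where A: "A \<subseteq> nb G v" "card A = n - 2"
      using obtain_subset_with_card_n by metis
    show ?thesis
    proof (rule core[OF s n cV v, of A "{}"])
      show "A \<subseteq> nb G v" by (fact A(1))
      show "n - 3 \<le> card A" "card A \<le> n - 2" using A by auto
      show "{} \<subseteq> {v}" by simp
      show "n - 2 \<le> card A + card {}" using A by simp
      show "\<forall>b\<in>fst G - {v} - A. \<forall>w\<in>{}. {b, w} \<in> snd (complement G)" by simp
    qed
  qed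
  show ?thesis using K ij by (auto simp: tree_def)
qed

lemma nb_compl_card:
  assumes s: "simple_graph G" and v: "v \<in> fst G"
  shows "card (nb G v) + card (nb (complement G) v) = card (fst G) - 1"
proof -
  have fin: "finite (fst G)" using s by (simp add: simple_graph_def)
  have sub: "nb G v \<subseteq> fst G - {v}" using nb_sub[of G v] nb_notin[OF s, of v] by blast
  have "nb (complement G) v = (fst G - {v}) - nb G v" using nb_compl[OF s v] by blast
  then have "card (nb (complement G) v) = card (fst G - {v}) - card (nb G v)"
    using sub fin by (simp add: card_Diff_subset finite_subset)
  moreover have "card (nb G v) \<le> card (fst G - {v})" using sub fin by (intro card_mono) auto
  moreover have "card (fst G - {v}) = card (fst G) - 1" using v fin by simp
  ultimately show ?thesis by linarith
qed

lemma handshake: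
  fixes G :: "nat graph"
  assumes s: "simple_graph G"
  shows "even (\<Sum>v\<in>fst G. card (nb G v))"
proof -
  define V where "V = fst G"
  have fin: "finite V" using s by (simp add: simple_graph_def V_def)
  have finnb: "\<And>v. finite (nb G v)" using fin nb_sub finite_subset unfolding V_def by metis
  define P where "P = Sigma V (nb G)"
  have finP: "finite P" unfolding P_def using fin finnb by simp
  have sum: "(\<Sum>v\<in>V. card (nb G v)) = card P" unfolding P_def using fin finnb by simp
  define P1 where "P1 = {p\<in>P. fst p < snd p}"
  define P2 where "P2 = {p\<in>P. snd p < fst p}"
  have sym: "\<And>u w. w \<in> nb G u \<longleftrightarrow> u \<in> nb G w"
    by (simp add: nb_iff[OF s] insert_commute)
  have inV: "\<And>u w. w \<in> nb G u \<Longrightarrow> u \<in> V \<and> w \<in> V \<and> u \<noteq> w"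
  proof -
    fix u w assume "w \<in> nb G u"
    then have "w \<in> nb G u" "u \<in> nb G w" using sym by auto
    then show "u \<in> V \<and> w \<in> V \<and> u \<noteq> w"
      using nb_sub[of G u] nb_sub[of G w] nb_notin[OF s, of u] unfolding V_def by blast
  qed
  have PU: "P = P1 \<union> P2"
  proof -
    have "\<And>p. p \<in> P \<Longrightarrow> fst p \<noteq> snd p" using inV unfolding P_def by auto
    then show ?thesis unfolding P1_def P2_def by (auto simp: nat_neq_iff)
  qed
  have dis: "P1 \<inter> P2 = {}" unfolding P1_def P2_def by auto
  have sw: "prod.swap ` P1 = P2"
  proof
    show "prod.swap ` P1 \<subseteq> P2" unfolding P1_def P2_def P_def using sym inV by auto
    show "P2 \<subseteq> prod.swap ` P1"
    proof
      fix p assume p: "p \<in> P2"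
      obtain a b where ab: "p = (a,b)" by fastforce
      have "(b,a) \<in> P1" using p ab sym inV unfolding P1_def P2_def P_def by auto
      then show "p \<in> prod.swap ` P1" using ab by force
    qed
  qed
  have "card P2 = card P1" using sw card_image[of prod.swap P1] by (metis inj_swap inj_on_subset subset_UNIV)
  moreover have "card P = card P1 + card P2" using PU dis finP
    by (metis card_Un_disjoint finite_Un)
  ultimately have "card P = 2 * card P1" by simp
  then show ?thesis using sum unfolding V_def by simp
qed

lemma lb:
  assumes s: "simple_graph H" and deg: "\<forall>c\<in>fst H. card (nb H c) \<le> n - 4" and n: "n \<ge> 5"
    and i: "i \<in> {1,2}"
  shows "\<not> contains H (tree n i)"
proof
  assume "contains H (tree n i)"
  then obtain f where f: "inj_on f {0..<n}" "f ` {0..<n} \<subseteq> fst H"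
    "\<forall>u\<in>{0..<n}. \<forall>w\<in>{0..<n}. {u,w} \<in> snd (tree n i) \<longrightarrow> {f u, f w} \<in> snd H"
    unfolding contains_def using i by (auto simp: tree_def tree1_def tree2_def)
  have fin: "finite (fst H)" using s by (simp add: simple_graph_def)
  have sub: "f ` {1..n-3} \<subseteq> nb H (f 0)"
  proof
    fix y assume "y \<in> f ` {1..n-3}"
    then obtain k where k: "k \<in> {1..n-3}" "y = f k" by auto
    have "{0,k} \<in> snd (tree n i)" using k i by (auto simp: tree_def tree1_def tree2_def)
    then have "{f 0, f k} \<in> snd H" using f(3) k n by auto
    then show "y \<in> nb H (f 0)" using k nb_iff[OF s] by auto
  qed
  have "{1..n-3} \<subseteq> {0..<n}" by auto
  then have "card (f ` {1..n-3}) = n - 3"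
    using card_image[OF inj_on_subset[OF f(1)]] n by auto
  moreover have "card (f ` {1..n-3}) \<le> card (nb H (f 0))"
    using sub finite_subset[OF nb_sub[of H "f 0"] fin] by (intro card_mono) auto
  moreover have "f 0 \<in> fst H" using f(2) n by auto
  ultimately show False using deg n by fastforce
qed

definition mkG :: "nat \<Rightarrow> (nat \<Rightarrow> nat \<Rightarrow> bool) \<Rightarrow> nat graph" where
  "mkG N P = ({0..<N}, {{u,w} | u w. u < N \<and> w < N \<and> u \<noteq> w \<and> P u w})"

lemma mk_simple: "simple_graph (mkG N P)"
  unfolding simple_graph_def mkG_def by auto

lemma mk_nb:
  assumes sym: "\<And>u w. P u w = P w u"
  shows "nb (mkG N P) c = {x. x < N \<and> x \<noteq> c \<and> c < N \<and> P c x}"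
proof -
  have "\<And>x. {c,x} \<in> snd (mkG N P) \<longleftrightarrow> x < N \<and> x \<noteq> c \<and> c < N \<and> P c x"
  proof
    fix x assume "{c,x} \<in> snd (mkG N P)"
    then obtain u w where "{c,x} = {u,w}" "u < N" "w < N" "u \<noteq> w" "P u w" unfolding mkG_def by auto
    then show "x < N \<and> x \<noteq> c \<and> c < N \<and> P c x" using sym by (auto simp: doubleton_eq_iff)
  next
    fix x assume "x < N \<and> x \<noteq> c \<and> c < N \<and> P c x"
    then show "{c,x} \<in> snd (mkG N P)" unfolding mkG_def by auto
  qed
  then show ?thesis unfolding nb_def mkG_def by auto
qed

lemma mk_nbc:
  assumes sym: "\<And>u w. P u w = P w u" and c: "c < N"
  shows "nb (complement (mkG N P)) c = {x. x < N \<and> x \<noteq> c \<and> \<not> P c x}"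
proof -
  have "c \<in> fst (mkG N P)" using c by (simp add: mkG_def)
  then show ?thesis using nb_compl[OF mk_simple] mk_nb[of P N c, OF sym] c by (auto simp: mkG_def)
qed

lemma mk_fail:
  assumes sym: "\<And>u w. P u w = P w u" and n: "n \<ge> 5" and i: "i \<in> {1,2}" and j: "j \<in> {1,2}"
    and r: "\<And>c. c < N \<Longrightarrow> card {x. x < N \<and> x \<noteq> c \<and> P c x} \<le> n - 4"
    and b: "\<And>c. c < N \<Longrightarrow> card {x. x < N \<and> x \<noteq> c \<and> \<not> P c x} \<le> n - 4"
  shows "simple_graph (mkG N P) \<and> card (fst (mkG N P)) = N \<and>
     \<not> contains (mkG N P) (tree n i) \<and> \<not> contains (complement (mkG N P)) (tree n j)"
proof (intro conjI)
  show "simple_graph (mkG N P)" by (rule mk_simple)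
  show "card (fst (mkG N P)) = N" by (simp add: mkG_def)
  show "\<not> contains (mkG N P) (tree n i)"
  proof (rule lb[OF mk_simple _ n i], intro ballI)
    fix c assume "c \<in> fst (mkG N P)"
    then have c: "c < N" by (simp add: mkG_def)
    then show "card (nb (mkG N P) c) \<le> n - 4" using mk_nb[of P N c, OF sym] r[OF c] by simp
  qed
  show "\<not> contains (complement (mkG N P)) (tree n j)"
  proof (rule lb[OF compl_simple[OF mk_simple] _ n j], intro ballI)
    fix c assume "c \<in> fst (complement (mkG N P))"
    then have c: "c < N" by (simp add: mkG_def)
    then show "card (nb (complement (mkG N P)) c) \<le> n - 4" using mk_nbc[OF sym c] b[OF c] by simp
  qed
qed

lemma odd_constr:
  assumes n: "n \<ge> 5" and N: "N \<le> 2*n - 8" and c: "c < N"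
  shows "card {x. x < N \<and> x \<noteq> c \<and> (c < n-4 \<longleftrightarrow> x < n-4)} \<le> n - 4"
    and "card {x. x < N \<and> x \<noteq> c \<and> \<not> (c < n-4 \<longleftrightarrow> x < n-4)} \<le> n - 4"
proof -
  show "card {x. x < N \<and> x \<noteq> c \<and> (c < n-4 \<longleftrightarrow> x < n-4)} \<le> n - 4"
  proof (cases "c < n - 4")
    case True
    then have "{x. x < N \<and> x \<noteq> c \<and> (c < n-4 \<longleftrightarrow> x < n-4)} \<subseteq> {0..<n-4}" by auto
    from card_mono[OF finite_atLeastLessThan this] show ?thesis by simp
  next
    case False
    then have "{x. x < N \<and> x \<noteq> c \<and> (c < n-4 \<longleftrightarrow> x < n-4)} \<subseteq> {n-4..<N}" by auto
    then have "card {x. x < N \<and> x \<noteq> c \<and> (c < n-4 \<longleftrightarrow> x < n-4)} \<le> N - (n-4)"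
      using card_mono[OF finite_atLeastLessThan] by fastforce
    moreover have "N - (n-4) \<le> n - 4" using N n by arith
    ultimately show ?thesis by (rule le_trans)
  qed
  show "card {x. x < N \<and> x \<noteq> c \<and> \<not> (c < n-4 \<longleftrightarrow> x < n-4)} \<le> n - 4"
  proof (cases "c < n - 4")
    case False
    then have "{x. x < N \<and> x \<noteq> c \<and> \<not> (c < n-4 \<longleftrightarrow> x < n-4)} \<subseteq> {0..<n-4}" by auto
    from card_mono[OF finite_atLeastLessThan this] show ?thesis by simp
  next
    case True
    then have "{x. x < N \<and> x \<noteq> c \<and> \<not> (c < n-4 \<longleftrightarrow> x < n-4)} \<subseteq> {n-4..<N}" by auto
    then have "card {x. x < N \<and> x \<noteq> c \<and> \<not> (c < n-4 \<longleftrightarrow> x < n-4)} \<le> N - (n-4)"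
      using card_mono[OF finite_atLeastLessThan] by fastforce
    moreover have "N - (n-4) \<le> n - 4" using N n by arith
    ultimately show ?thesis by (rule le_trans)
  qed
qed

definition cl :: "nat \<Rightarrow> nat \<Rightarrow> nat \<Rightarrow> bool" where
  "cl n u w = (let d = (if u \<le> w then w - u else u - w) in d \<le> (n-4) div 2 \<or> 2*n-7 - (n-4) div 2 \<le> d)"

lemma cl_sym: "cl n u w = cl n w u"
  unfolding cl_def Let_def by (cases "u \<le> w"; cases "w \<le> u") auto

lemma even_constr:
  assumes n: "n \<ge> 12" and ev: "even n" and N: "N \<le> 2*n - 7" and c: "c < N"
  shows "card {x. x < N \<and> x \<noteq> c \<and> cl n c x} \<le> n - 4"
    and "card {x. x < N \<and> x \<noteq> c \<and> \<not> cl n c x} \<le> n - 4"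
proof -
  define M where "M = 2*n - 7"
  define h where "h = (n-4) div 2"
  have h2: "2*h = n - 4" using ev n unfolding h_def by auto
  have cM: "c < M" using c N unfolding M_def by linarith
  define \<phi> where "\<phi> x = (if c \<le> x then x - c else x + M - c)" for x
  have inj: "inj_on \<phi> {0..<M}"
    unfolding inj_on_def \<phi>_def using cM by (auto split: if_splits)
  have clx: "\<And>x. cl n c x \<longleftrightarrow> (let d = (if c \<le> x then x - c else c - x) in d \<le> h \<or> M - h \<le> d)"
    unfolding cl_def h_def M_def by simp
  let ?S = "{x. x < N \<and> x \<noteq> c \<and> cl n c x}"
  let ?T = "{x. x < N \<and> x \<noteq> c \<and> \<not> cl n c x}"
  have SM: "?S \<subseteq> {0..<M}" "?T \<subseteq> {0..<M}" using N unfolding M_def by auto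
  have imS: "\<phi> ` ?S \<subseteq> {1..h} \<union> {M-h..<M}"
  proof
    fix y assume "y \<in> \<phi> ` ?S"
    then obtain x where x: "x < N" "x \<noteq> c" "cl n c x" "y = \<phi> x" by auto
    have xM: "x < M" using x(1) N unfolding M_def by linarith
    show "y \<in> {1..h} \<union> {M-h..<M}"
      using x xM cM h2 n unfolding clx Let_def \<phi>_def M_def by (auto split: if_splits)
  qed
  have imT: "\<phi> ` ?T \<subseteq> {h+1..<M-h}"
  proof
    fix y assume "y \<in> \<phi> ` ?T"
    then obtain x where x: "x < N" "x \<noteq> c" "\<not> cl n c x" "y = \<phi> x" by auto
    have xM: "x < M" using x(1) N unfolding M_def by linarith
    show "y \<in> {h+1..<M-h}"
      using x xM cM h2 n unfolding clx Let_def \<phi>_def M_def by (auto split: if_splits)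
  qed
  have "card ?S = card (\<phi> ` ?S)" using inj_on_subset[OF inj SM(1)] by (simp add: card_image)
  also have "\<dots> \<le> card ({1..h} \<union> {M-h..<M})" using imS by (intro card_mono) auto
  also have "\<dots> \<le> card {1..h} + card {M-h..<M}" by (rule card_Un_le)
  also have "\<dots> \<le> n - 4" using h2 n unfolding M_def by simp
  finally show "card ?S \<le> n - 4" .
  have "card ?T = card (\<phi> ` ?T)" using inj_on_subset[OF inj SM(2)] by (simp add: card_image)
  also have "\<dots> \<le> card {h+1..<M-h}" using imT by (intro card_mono) auto
  also have "\<dots> \<le> n - 4" using h2 n unfolding M_def by simp
  finally show "card ?T \<le> n - 4" .
qed

lemma either:
  assumes s: "simple_graph G" and n: "n \<ge> 12" and cV: "card (fst G) \<ge> 2*n - 7" and v: "v \<in> fst G"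
    and d: "card (nb G v) \<ge> n - 3 \<or> card (nb (complement G) v) \<ge> n - 3"
    and ij: "i \<in> {1,2}" "j \<in> {1,2}"
  shows "contains G (tree n i) \<or> contains (complement G) (tree n j)"
  using d
proof
  assume "card (nb G v) \<ge> n - 3"
  then show ?thesis using ub[OF s n cV v _ ij] by blast
next
  assume a: "card (nb (complement G) v) \<ge> n - 3"
  have "contains (complement G) (tree n j) \<or> contains (complement (complement G)) (tree n i)"
    using ub[OF compl_simple[OF s] n _ _ a ij(2) ij(1)] cV v by simp
  then show ?thesis using compl_compl[OF s] by auto
qed

lemma up_odd:
  assumes n: "n \<ge> 17" "odd n" and ij: "i \<in> {1,2}" "j \<in> {1,2}"
  shows "ramsey_prop (tree n i) (tree n j) (2*n - 7)"
  unfolding ramsey_prop_def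
proof (intro allI impI, elim conjE)
  fix G :: "nat graph" assume s: "simple_graph G" and cV: "card (fst G) = 2*n - 7"
  show "contains G (tree n i) \<or> contains (complement G) (tree n j)"
  proof (cases "\<exists>v\<in>fst G. card (nb G v) \<ge> n - 3 \<or> card (nb (complement G) v) \<ge> n - 3")
    case True
    then obtain v where "v \<in> fst G" "card (nb G v) \<ge> n - 3 \<or> card (nb (complement G) v) \<ge> n - 3" by blast
    then show ?thesis using either[OF s _ _ _ _ ij] n cV by simp
  next
    case False
    have eq: "\<forall>v\<in>fst G. card (nb G v) = n - 4"
    proof
      fix v assume v: "v \<in> fst G"
      have "card (nb G v) + card (nb (complement G) v) = 2*n - 8" using nb_compl_card[OF s v] cV by simp
      then show "card (nb G v) = n - 4" using False v n by fastforce
    qed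
    have "(\<Sum>v\<in>fst G. card (nb G v)) = (2*n-7) * (n-4)" using eq cV by simp
    moreover have "odd ((2*n-7) * (n-4))" using n by (simp add: even_mult_iff)
    ultimately show ?thesis using handshake[OF s] by simp
  qed
qed

lemma up_even:
  assumes n: "n \<ge> 12" and ij: "i \<in> {1,2}" "j \<in> {1,2}"
  shows "ramsey_prop (tree n i) (tree n j) (2*n - 6)"
  unfolding ramsey_prop_def
proof (intro allI impI, elim conjE)
  fix G :: "nat graph" assume s: "simple_graph G" and cV: "card (fst G) = 2*n - 6"
  have "fst G \<noteq> {}" using cV n by auto
  then obtain v where v: "v \<in> fst G" by blast
  have "card (nb G v) + card (nb (complement G) v) = 2*n - 7" using nb_compl_card[OF s v] cV by simp
  then have "card (nb G v) \<ge> n - 3 \<or> card (nb (complement G) v) \<ge> n - 3" using n by linarith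
  then show "contains G (tree n i) \<or> contains (complement G) (tree n j)"
    using either[OF s n _ v _ ij] cV by simp
qed

lemma low_odd:
  assumes n: "n \<ge> 17" and ij: "i \<in> {1,2}" "j \<in> {1,2}" and N: "N \<le> 2*n - 8"
  shows "\<not> ramsey_prop (tree n i) (tree n j) N"
proof -
  let ?P = "\<lambda>u w::nat. (u < n-4 \<longleftrightarrow> w < n-4)"
  have "simple_graph (mkG N ?P) \<and> card (fst (mkG N ?P)) = N \<and>
     \<not> contains (mkG N ?P) (tree n i) \<and> \<not> contains (complement (mkG N ?P)) (tree n j)"
    by (rule mk_fail) (use n ij odd_constr[OF _ N] in auto)
  then show ?thesis unfolding ramsey_prop_def by blast
qed

lemma low_even:
  assumes n: "n \<ge> 12" "even n" and ij: "i \<in> {1,2}" "j \<in> {1,2}" and N: "N \<le> 2*n - 7"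
  shows "\<not> ramsey_prop (tree n i) (tree n j) N"
proof -
  have "simple_graph (mkG N (cl n)) \<and> card (fst (mkG N (cl n))) = N \<and>
     \<not> contains (mkG N (cl n)) (tree n i) \<and> \<not> contains (complement (mkG N (cl n))) (tree n j)"
    by (rule mk_fail) (use n ij even_constr[OF n N] cl_sym in auto)
  then show ?thesis unfolding ramsey_prop_def by blast
qed

theorem theorem4p1:
  fixes n i j :: nat
  assumes "i \<in> {1, 2}" and "j \<in> {1, 2}"
  shows "(odd n \<and> n \<ge> 17 \<longrightarrow> ramsey (tree n i) (tree n j) = 2 * n - 7) \<and>
         (even n \<and> n \<ge> 12 \<longrightarrow> ramsey (tree n i) (tree n j) = 2 * n - 6)"
proof (intro conjI impI; elim conjE)
  assume o: "odd n" and n: "n \<ge> 17"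
  show "ramsey (tree n i) (tree n j) = 2 * n - 7"
    unfolding ramsey_def
  proof (rule Least_equality)
    show "0 < 2*n - 7 \<and> ramsey_prop (tree n i) (tree n j) (2*n - 7)"
      using up_odd[OF n o assms] n by simp
    fix y assume "0 < y \<and> ramsey_prop (tree n i) (tree n j) y"
    then show "2*n - 7 \<le> y" using low_odd[OF n assms, of y] by (cases "y \<le> 2*n-8") auto
  qed
next
  assume e: "even n" and n: "n \<ge> 12"
  show "ramsey (tree n i) (tree n j) = 2 * n - 6"
    unfolding ramsey_def
  proof (rule Least_equality)
    show "0 < 2*n - 6 \<and> ramsey_prop (tree n i) (tree n j) (2*n - 6)"
      using up_even[OF n assms] n by simp
    fix y assume "0 < y \<and> ramsey_prop (tree n i) (tree n j) y"
    then show "2*n - 6 \<le> y" using low_even[OF n e assms, of y] by (cases "y \<le> 2*n-7") auto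
  qed
qed

end
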